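(* Let $T$ be a Galton–Watson tree with finite alphabet $\mathbb{A}$ and offspring distribution $W$ with $m=\mathbb{E}|W|>1$. For integers $k,a>0$ define $g_{k,a}(s)=\mathbb{P}(Z_k^{(s)}<a)$ for $s\in[0,1]$. Let $(a_k)_{k\in\mathbb{N}}$ be positive integers with $\limsup_{k\to\infty}a_k^{1/k}<m$. Then $g_{k,a_k}(s)\to\mathbb{P}(\text{extinction})$ as $k\to\infty$, for every $s\in(0,1)$.
   Context: The Galton–Watson tree with offspring distribution $W$ (random subset of $\mathbb{A}$, $\mathbb{P}(i\in W)>0$ for all $i$) is $T_0=\{\emptyset\}$, $T_n=\{aj:a\in T_{n-1},j\in W_a\}$, $(W_a)$ independent copies of $W$; extinction means $T_n=\emptyset$ for some $n$. $T_k^{(s)}=T_k\cap Y$ where $Y\subseteq\mathbb{A}^k$ is independent of $T$ with $\mathbb{P}(Y=B)=(1-s)^{|B|}s^{|\mathbb{A}^k\setminus B|}$; $Z_k^{(s)}=|T_k^{(s)}|$. *)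

theory Defs
  imports "HOL-Probability.Probability"
begin

definition words :: "nat \<Rightarrow> 'a list set" where
  "words k = {w. length w = k}"

fun gw_tree :: "('a list \<Rightarrow> 'm \<Rightarrow> 'a set) \<Rightarrow> nat \<Rightarrow> 'm \<Rightarrow> 'a list set" where
  "gw_tree Wf 0 \<omega> = {[]}"
| "gw_tree Wf (Suc n) \<omega> = {u @ [j] | u j. u \<in> gw_tree Wf n \<omega> \<and> j \<in> Wf u \<omega>}"

text \<open>Law of Y: each word of length k kept independently with probability 1-s,
  so P(Y = B) = (1-s)^|B| s^|A^k - B|.\<close>
definition percol_pmf :: "nat \<Rightarrow> real \<Rightarrow> 'a list set pmf" where
  "percol_pmf k s = map_pmf (\<lambda>f. {w. f w}) (Pi_pmf (words k) False (\<lambda>_. bernoulli_pmf (1 - s)))"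

text \<open>g_{k,a}(s) = P(Z_k^{(s)} < a), with Y independent of the tree (product measure).\<close>
definition gw_g :: "'m measure \<Rightarrow> ('a list \<Rightarrow> 'm \<Rightarrow> 'a set) \<Rightarrow> nat \<Rightarrow> nat \<Rightarrow> real \<Rightarrow> real" where
  "gw_g M Wf k a s = measure (M \<Otimes>\<^sub>M measure_pmf (percol_pmf k s))
     {(\<omega>, B). \<omega> \<in> space M \<and> card (gw_tree Wf k \<omega> \<inter> B) < a}"

definition gw_extinction_prob :: "'m measure \<Rightarrow> ('a list \<Rightarrow> 'm \<Rightarrow> 'a set) \<Rightarrow> real" where
  "gw_extinction_prob M Wf = measure M {\<omega> \<in> space M. \<exists>n. gw_tree Wf n \<omega> = {}}"

end

theory Submission
  imports Defs
begin


definition gf :: "('a::finite) set pmf \<Rightarrow> real \<Rightarrow> real" where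
  "gf W y = (\<Sum>S\<in>UNIV. pmf W S * y ^ card S)"

definition mn :: "('a::finite) set pmf \<Rightarrow> real" where
  "mn W = (\<Sum>S\<in>UNIV. pmf W S * real (card S))"

lemma sum_pmf_univ: "(\<Sum>S\<in>(UNIV::('a::finite) set set). pmf W S) = 1"
  using sum_pmf_eq_1[of UNIV W] by simp

lemma gf_1: "gf W 1 = 1"
  by (simp add: gf_def sum_pmf_univ)

lemma gf_mono: "0 \<le> x \<Longrightarrow> x \<le> y \<Longrightarrow> gf W x \<le> gf W y"
  unfolding gf_def by (intro sum_mono mult_left_mono power_mono) auto

lemma gf_nonneg: "0 \<le> x \<Longrightarrow> 0 \<le> gf W x"
  unfolding gf_def by (intro sum_nonneg) auto

lemma gf_le1: "0 \<le> x \<Longrightarrow> x \<le> 1 \<Longrightarrow> gf W x \<le> 1"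
  using gf_mono[of x 1 W] gf_1[of W] by simp

lemma gf_cont: "isCont (gf W) x"
  unfolding gf_def by (intro continuous_intros)

lemma pow_upper: 
  fixes t :: real assumes "0 \<le> t" "t \<le> 1"
  shows "(1 - t) ^ j \<le> 1 - real j * t + (real j)^2 * t^2"
proof (induction j)
  case 0 then show ?case by simp
next
  case (Suc j)
  have "(1 - t) ^ Suc j = (1 - t) * (1-t)^j" by simp
  also have "\<dots> \<le> (1 - t) * (1 - real j * t + (real j)^2 * t^2)"
    using Suc assms by (intro mult_left_mono) auto
  also have "\<dots> \<le> 1 - real (Suc j) * t + (real (Suc j))^2 * t^2"
  proof -
    have "(1 - t) * (1 - real j * t + (real j)^2 * t^2) = 1 - real (Suc j) * t + (real j + (real j)^2) * t^2 - (real j)^2 * t^3"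
      by (simp add: algebra_simps power2_eq_square power3_eq_cube)
    also have "\<dots> \<le> 1 - real (Suc j) * t + (real j + (real j)^2) * t^2" using assms by simp
    also have "\<dots> \<le> 1 - real (Suc j) * t + (real (Suc j))^2 * t^2"
      by (intro add_left_mono mult_right_mono) (auto simp: power2_eq_square algebra_simps)
    finally show ?thesis .
  qed
  finally show ?case .
qed

lemma gf_near1:
  fixes W :: "('a::finite) set pmf" and t :: real
  assumes "0 \<le> t" "t \<le> 1"
  shows "1 - gf W (1 - t) \<ge> t * mn W * (1 - real CARD('a) * t)"
proof -
  have cS: "card S \<le> CARD('a)" for S :: "'a set" by (simp add: card_mono)
  have "1 - gf W (1 - t) = (\<Sum>S\<in>UNIV. pmf W S * (1 - (1-t)^card S))"
    by (simp add: gf_def sum_subtractf right_diff_distrib sum_pmf_univ)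
  also have "\<dots> \<ge> (\<Sum>S\<in>UNIV. pmf W S * (real (card S) * t - real CARD('a) * real (card S) * t^2))"
  proof (intro sum_mono mult_left_mono)
    fix S :: "'a set"
    have "real (card S) ^ 2 * t^2 \<le> real CARD('a) * real (card S) * t^2"
    proof -
      have "real (card S) * real (card S) \<le> real CARD('a) * real (card S)"
        using cS[of S] by (intro mult_right_mono) auto
      then show ?thesis by (intro mult_right_mono) (auto simp: power2_eq_square)
    qed
    then show "real (card S) * t - real CARD('a) * real (card S) * t^2 \<le> 1 - (1-t)^card S"
      using pow_upper[OF assms, of "card S"] by linarith
  qed auto
  also have "(\<Sum>S\<in>UNIV. pmf W S * (real (card S) * t - real CARD('a) * real (card S) * t^2))
     = t * mn W * (1 - real CARD('a) * t)"
    by (simp add: mn_def sum_distrib_left sum_distrib_right sum_subtractf algebra_simps power2_eq_square)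
  finally show ?thesis .
qed

lemma pow_convex:
  fixes a b l :: real assumes "0 \<le> a" "0 \<le> b" "0 \<le> l" "l \<le> 1"
  shows "((1-l)*a + l*b)^n \<le> (1-l)*a^n + l*b^n"
proof -
  have "convex_on {0..} (\<lambda>x::real. x^n)"
  proof (cases "even n")
    case True then show ?thesis using convex_power_even convex_on_subset by blast
  next
    case False then show ?thesis using convex_power_odd by blast
  qed
  from convex_onD[OF this, of l a b] assms show ?thesis by simp
qed

lemma gf_convex:
  assumes "0 \<le> a" "0 \<le> b" "0 \<le> l" "l \<le> 1"
  shows "gf W ((1-l)*a + l*b) \<le> (1-l)*gf W a + l * gf W b"
proof -
  have "gf W ((1-l)*a + l*b) \<le> (\<Sum>S\<in>UNIV. pmf W S * ((1-l)*a^card S + l*b^card S))"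
    unfolding gf_def by (intro sum_mono mult_left_mono pow_convex assms) auto
  also have "\<dots> = (1-l)*gf W a + l * gf W b"
    by (simp add: gf_def sum_distrib_left sum.distrib sum_subtractf algebra_simps)
  finally show ?thesis .
qed

lemma it_nonneg: "0 \<le> x \<Longrightarrow> 0 \<le> (gf W ^^ i) x"
  by (induction i) (auto intro: gf_nonneg)

lemma it_le1: "0 \<le> x \<Longrightarrow> x \<le> 1 \<Longrightarrow> (gf W ^^ i) x \<le> 1"
  by (induction i) (auto intro: gf_le1 it_nonneg)

lemma it_mono: "0 \<le> x \<Longrightarrow> x \<le> y \<Longrightarrow> (gf W ^^ i) x \<le> (gf W ^^ i) y"
  by (induction i) (auto intro: gf_mono it_nonneg)

lemma it_cont: "isCont (gf W ^^ i) x"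
proof (induction i arbitrary: x)
  case 0 then show ?case by simp
next
  case (Suc i)
  have "isCont (\<lambda>x. gf W ((gf W ^^ i) x)) x"
    by (rule isCont_o2[OF Suc gf_cont])
  then show ?case by (simp add: o_def)
qed

lemma near1_exists:
  fixes W :: "('a::finite) set pmf"
  assumes "0 < c" "c < mn W"
  obtains t0 where "0 < t0" "t0 \<le> 1" "\<And>t. 0 \<le> t \<Longrightarrow> t \<le> t0 \<Longrightarrow> gf W (1 - t) \<le> 1 - c * t"
proof -
  define n where "n = real CARD('a)"
  have n: "n \<ge> 1" unfolding n_def by simp
  define t0 where "t0 = min 1 ((1 - c / mn W) / n)"
  have mpos: "mn W > 0" using assms by simp
  have "c / mn W < 1" using assms mpos by simp
  then have "t0 > 0" unfolding t0_def using n by simp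
  moreover have "t0 \<le> 1" unfolding t0_def by simp
  moreover have "gf W (1 - t) \<le> 1 - c * t" if t: "0 \<le> t" "t \<le> t0" for t
  proof -
    have "n * t \<le> 1 - c / mn W"
      using t n unfolding t0_def by (auto simp: field_simps)
    then have "mn W * (1 - n * t) \<ge> mn W * (c / mn W)"
      using mpos by (intro mult_left_mono) auto
    then have "mn W * (1 - n * t) \<ge> c" using mpos by simp
    then have "t * mn W * (1 - n * t) \<ge> c * t" using t
      by (metis mult.assoc mult.commute mult_left_mono)
    moreover have "1 - gf W (1 - t) \<ge> t * mn W * (1 - n * t)"
      using gf_near1[of t W] t \<open>t0 \<le> 1\<close> unfolding n_def by simp
    ultimately show ?thesis by simp
  qed
  ultimately show ?thesis using that by blast
qed

lemma gf_fix_lt: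
  fixes W :: "('a::finite) set pmf"
  assumes m: "mn W > 1" and q: "gf W q = q" "0 \<le> q" "q < y" and y: "y < 1"
  shows "gf W y < y"
proof -
  define c where "c = (1 + mn W) / 2"
  have c: "1 < c" "c < mn W" using m unfolding c_def by auto
  obtain t0 where t0: "0 < t0" "t0 \<le> 1" "\<And>t. 0 \<le> t \<Longrightarrow> t \<le> t0 \<Longrightarrow> gf W (1 - t) \<le> 1 - c * t"
    using near1_exists[of c W] c by auto
  define t where "t = min t0 ((1 - y) / 2)"
  have t: "0 < t" "t \<le> t0" "t \<le> (1 - y)/2" using t0 y unfolding t_def by (auto simp: min_def)
  define z where "z = 1 - t"
  have z: "y < z" "z < 1" using t y unfolding z_def by auto
  have gz: "gf W z < z"
  proof -
    have "gf W z \<le> 1 - c * t" unfolding z_def using t0(3)[of t] t by simp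
    also have "\<dots> < 1 - t" using c t by simp
    finally show ?thesis unfolding z_def .
  qed
  define l where "l = (y - q) / (z - q)"
  have l: "0 < l" "l \<le> 1" using q z unfolding l_def by auto
  have "l * (z - q) = y - q" using q z unfolding l_def by simp
  then have yl: "y = (1 - l) * q + l * z" by (simp add: algebra_simps)
  have "gf W y \<le> (1 - l) * gf W q + l * gf W z"
    unfolding yl using l q z by (intro gf_convex) auto
  also have "\<dots> < (1 - l) * q + l * z" using q l gz by simp
  finally show ?thesis using yl by simp
qed

lemma gf_fix_q:
  assumes "(\<lambda>i. (gf W ^^ i) 0) \<longlonglongrightarrow> q"
  shows "gf W q = q" "0 \<le> q" "q \<le> 1"
proof -
  have "(\<lambda>i. gf W ((gf W ^^ i) 0)) \<longlonglongrightarrow> gf W q"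
    by (rule isCont_tendsto_compose[OF gf_cont assms])
  moreover have "(\<lambda>i. gf W ((gf W ^^ i) 0)) = (\<lambda>i. (gf W ^^ Suc i) 0)" by simp
  moreover have "(\<lambda>i. (gf W ^^ Suc i) 0) \<longlonglongrightarrow> q"
    using LIMSEQ_Suc[OF assms] .
  ultimately show "gf W q = q" using LIMSEQ_unique by metis
  show "0 \<le> q" by (rule LIMSEQ_le_const[OF assms]) (auto intro: it_nonneg)
  show "q \<le> 1" by (rule LIMSEQ_le_const2[OF assms]) (use it_le1[where x=0 and W=W] in auto)
qed

lemma iter_conv:
  fixes W :: "('a::finite) set pmf"
  assumes m: "mn W > 1" and lim: "(\<lambda>i. (gf W ^^ i) 0) \<longlonglongrightarrow> q" and y: "0 \<le> y" "y < 1"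
  shows "(\<lambda>i. (gf W ^^ i) y) \<longlonglongrightarrow> q"
proof -
  note qf = gf_fix_q[OF lim]
  have itq: "(gf W ^^ i) q = q" for i by (induction i) (auto simp: qf)
  show ?thesis
  proof (cases "y \<le> q")
    case True
    show ?thesis
    proof (rule tendsto_sandwich[OF _ _ lim tendsto_const])
      show "\<forall>\<^sub>F i in sequentially. (gf W ^^ i) 0 \<le> (gf W ^^ i) y"
        using y it_mono[where x=0 and y=y and W=W] by auto
      show "\<forall>\<^sub>F i in sequentially. (gf W ^^ i) y \<le> q"
        using it_mono[where x=y and y=q and W=W] True y itq by auto
    qed
  next
    case False
    then have yq: "q < y" by simp
    have lt: "gf W x < x" if "q < x" "x < 1" for x
      using gf_fix_lt[OF m qf(1) qf(2) that] .
    have dec: "decseq (\<lambda>i. (gf W ^^ i) y)"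
    proof (rule decseq_SucI)
      fix i
      have "(gf W ^^ Suc i) y = (gf W ^^ i) (gf W y)" by (simp add: funpow_Suc_right del: funpow.simps)
      also have "\<dots> \<le> (gf W ^^ i) y"
        using lt[OF yq y(2)] gf_nonneg[of y W] y by (intro it_mono) auto
      finally show "(gf W ^^ Suc i) y \<le> (gf W ^^ i) y" .
    qed
    have lb: "q \<le> (gf W ^^ i) y" for i
      using it_mono[where x=q and y=y and W=W and i=i] itq qf yq by auto
    obtain L where L: "(\<lambda>i. (gf W ^^ i) y) \<longlonglongrightarrow> L"
      using decseq_convergent[OF dec, of q] lb by blast
    have "(\<lambda>i. gf W ((gf W ^^ i) y)) \<longlonglongrightarrow> gf W L"
      by (rule isCont_tendsto_compose[OF gf_cont L])
    moreover have "(\<lambda>i. gf W ((gf W ^^ i) y)) \<longlonglongrightarrow> L"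
      using LIMSEQ_Suc[OF L] by simp
    ultimately have fL: "gf W L = L" using LIMSEQ_unique by metis
    have "q \<le> L" by (rule LIMSEQ_le_const[OF L]) (use lb in auto)
    have "L \<le> y" by (rule LIMSEQ_le_const2[OF L]) (use dec in \<open>force simp: decseq_def\<close>)
    have "L = q"
    proof (rule ccontr)
      assume "L \<noteq> q"
      then have "q < L" using \<open>q \<le> L\<close> by simp
      then have "gf W L < L" using lt \<open>L \<le> y\<close> y by simp
      then show False using fL by simp
    qed
    then show ?thesis using L by simp
  qed
qed

lemma growth:
  fixes W :: "('a::finite) set pmf"
  assumes c: "1 \<le> c" and t0: "0 < t0" "t0 \<le> 1"
    and near: "\<And>t. 0 \<le> t \<Longrightarrow> t \<le> t0 \<Longrightarrow> gf W (1 - t) \<le> 1 - c * t"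
    and v: "0 \<le> v" "v \<le> 1"
  shows "1 - (gf W ^^ j) (1 - v) \<ge> min t0 (v * c ^ j)"
proof (induction j)
  case 0 then show ?case using v by simp
next
  case (Suc j)
  define u where "u = 1 - (gf W ^^ j) (1 - v)"
  have u: "0 \<le> u" "u \<le> 1" unfolding u_def
    using it_nonneg[where x="1-v" and W=W and i=j] it_le1[where x="1-v" and W=W and i=j] v by auto
  define w where "w = min t0 (v * c ^ j)"
  have w: "0 \<le> w" "w \<le> t0" "w \<le> u" using Suc t0 v c unfolding w_def u_def by auto
  have "(gf W ^^ Suc j) (1 - v) = gf W (1 - u)" unfolding u_def by simp
  also have "\<dots> \<le> gf W (1 - w)" using u w by (intro gf_mono) auto
  also have "\<dots> \<le> 1 - c * w" using near w by simp
  finally have "1 - (gf W ^^ Suc j) (1 - v) \<ge> c * w" by simp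
  moreover have "c * w \<ge> min t0 (v * c ^ Suc j)"
  proof -
    have "c * w = min (c * t0) (v * c ^ Suc j)" unfolding w_def using c
      by (simp add: min_mult_distrib_left algebra_simps)
    moreover have "c * t0 \<ge> t0" using c t0 by simp
    ultimately show ?thesis by linarith
  qed
  ultimately show ?case by linarith
qed

lemma analytic_main:
  fixes W :: "('a::finite) set pmf"
  assumes m: "mn W > 1" and lim: "(\<lambda>i. (gf W ^^ i) 0) \<longlonglongrightarrow> q"
    and c: "1 \<le> c" "c < mn W" and eps: "0 < \<epsilon>" "\<epsilon> \<le> 1" and e: "0 < e"
  shows "\<forall>\<^sub>F k in sequentially. \<forall>y. 0 \<le> y \<and> y \<le> 1 - \<epsilon> / c ^ k \<longrightarrow> (gf W ^^ k) y \<le> q + e"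
proof -
  define c' where "c' = (c + mn W) / 2"
  have c': "c < c'" "c' < mn W" "1 \<le> c'" using c unfolding c'_def by auto
  obtain t0 where t0: "0 < t0" "t0 \<le> 1" "\<And>t. 0 \<le> t \<Longrightarrow> t \<le> t0 \<Longrightarrow> gf W (1 - t) \<le> 1 - c' * t"
    using near1_exists[of c' W] c' c by auto
  have "(\<lambda>i. (gf W ^^ i) (1 - t0)) \<longlonglongrightarrow> q"
    using iter_conv[OF m lim, of "1 - t0"] t0 by simp
  then have "\<forall>\<^sub>F i in sequentially. (gf W ^^ i) (1 - t0) < q + e"
    using e by (auto simp: tendsto_iff dist_real_def dest!: spec[of _ e] elim: eventually_mono)
  then obtain D where D: "(gf W ^^ D) (1 - t0) < q + e"
    by (auto simp: eventually_sequentially)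
  have cc: "1 < c' / c" using c' c by simp
  obtain K where K: "t0 * c' ^ D / \<epsilon> < (c' / c) ^ K" using real_arch_pow[OF cc] by blast
  show ?thesis
    unfolding eventually_sequentially
  proof (intro exI[of _ "max K D"] allI impI)
    fix k y assume k: "max K D \<le> k" and y: "0 \<le> y \<and> y \<le> 1 - \<epsilon> / c ^ k"
    define v where "v = \<epsilon> / c ^ k"
    have ck: "c ^ k \<ge> 1" using c by simp
    have v: "0 \<le> v" "v \<le> 1" unfolding v_def using eps ck by (auto simp: field_simps)
    have "(c' / c) ^ K \<le> (c' / c) ^ k" using cc k by (intro power_increasing) auto
    with K have "t0 * c' ^ D / \<epsilon> < (c'/c)^k" by simp
    then have "t0 * c' ^ D < \<epsilon> * (c'/c)^k" using eps by (simp add: field_simps)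
    also have "\<epsilon> * (c'/c)^k = v * c' ^ (k - D) * c' ^ D"
    proof -
      have "c' ^ (k - D) * c' ^ D = c' ^ k" using k by (simp add: power_add[symmetric])
      then show ?thesis unfolding v_def using c by (simp add: power_divide field_simps)
    qed
    finally have "t0 < v * c' ^ (k - D)" using c' by simp
    then have g: "1 - (gf W ^^ (k - D)) (1 - v) \<ge> t0"
      using growth[OF c'(3) t0(1,2) t0(3) v, of "k - D"] by simp
    have kk: "k = D + (k - D)" using k by simp
    have "(gf W ^^ k) y \<le> (gf W ^^ k) (1 - v)" using y unfolding v_def by (intro it_mono) auto
    also have "\<dots> = (gf W ^^ D) ((gf W ^^ (k - D)) (1 - v))"
      by (subst kk) (simp add: funpow_add)
    also have "\<dots> \<le> (gf W ^^ D) (1 - t0)"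
      using g it_nonneg[where x="1-v" and W=W and i="k-D"] v by (intro it_mono) auto
    finally show "(gf W ^^ k) y \<le> q + e" using D by simp
  qed
qed



lemma finite_words: "finite (words k :: ('a::finite) list set)"
proof -
  have "words k = {xs :: 'a list. set xs \<subseteq> UNIV \<and> length xs = k}" by (auto simp: words_def)
  then show ?thesis using finite_lists_length_eq[of "UNIV :: 'a set" k] by simp
qed

lemma finite_shorter: "finite {u :: ('a::finite) list. length u < k}"
proof -
  have "{u :: 'a list. length u < k} = (\<Union>j<k. words j)" by (auto simp: words_def)
  then show ?thesis by (simp add: finite_words)
qed

lemma gw_tree_len: "u \<in> gw_tree Wf k \<omega> \<Longrightarrow> length u = k"
  by (induction k arbitrary: u) auto

lemma gw_tree_words: "gw_tree Wf k \<omega> \<subseteq> words k"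
  using gw_tree_len by (auto simp: words_def)

lemma gw_tree_finite: "finite (gw_tree Wf k \<omega> :: ('a::finite) list set)"
  using gw_tree_words finite_words finite_subset by metis

lemma gw_tree_local:
  "(\<And>u. length u < k \<Longrightarrow> Wf u \<omega> = Wf' u \<omega>') \<Longrightarrow> gw_tree Wf k \<omega> = gw_tree Wf' k \<omega>'"
proof (induction k)
  case 0 then show ?case by simp
next
  case (Suc k)
  then have IH: "gw_tree Wf k \<omega> = gw_tree Wf' k \<omega>'" by simp
  show ?case
  proof -
    have "u \<in> gw_tree Wf k \<omega> \<Longrightarrow> Wf u \<omega> = Wf' u \<omega>'" for u
      using Suc.prems gw_tree_len[of u Wf k \<omega>] by simp
    then show ?thesis using IH by auto
  qed
qed

lemma gw_tree_Suc_UN: "gw_tree Wf (Suc k) \<omega> = (\<Union>u\<in>gw_tree Wf k \<omega>. (\<lambda>j. u @ [j]) ` Wf u \<omega>)"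
  by auto

lemma card_gw_tree_Suc:
  fixes Wf :: "('a::finite) list \<Rightarrow> 'm \<Rightarrow> 'a set"
  shows "card (gw_tree Wf (Suc k) \<omega>) = (\<Sum>u\<in>gw_tree Wf k \<omega>. card (Wf u \<omega>))"
proof -
  have "card (gw_tree Wf (Suc k) \<omega>) = (\<Sum>u\<in>gw_tree Wf k \<omega>. card ((\<lambda>j. u @ [j]) ` Wf u \<omega>))"
    unfolding gw_tree_Suc_UN
    by (rule card_UN_disjoint) (auto simp: gw_tree_finite)
  also have "\<dots> = (\<Sum>u\<in>gw_tree Wf k \<omega>. card (Wf u \<omega>))"
    by (intro sum.cong refl card_image) (auto simp: inj_on_def)
  finally show ?thesis .
qed

lemma measurable_PiM_finite:
  fixes K :: "'i set"
  assumes K: "finite K" and L: "space L = UNIV"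
  shows "g \<in> measurable (PiM K (\<lambda>_. count_space (UNIV :: ('b::finite) set))) L"
proof (rule measurableI)
  fix x show "g x \<in> space L" using L by simp
next
  fix A assume "A \<in> sets L"
  let ?P = "PiM K (\<lambda>_. count_space (UNIV :: 'b set))"
  have sp: "space ?P = PiE K (\<lambda>_. UNIV)" by (simp add: space_PiM)
  have fin: "finite (PiE K (\<lambda>_. UNIV :: 'b set))" using K by (intro finite_PiE) auto
  have "g -` A \<inter> space ?P = (\<Union>F\<in>g -` A \<inter> PiE K (\<lambda>_. UNIV). PiE K (\<lambda>u. {F u}))"
    unfolding sp
  proof (intro equalityI subsetI)
    fix x assume "x \<in> g -` A \<inter> PiE K (\<lambda>_. UNIV)"
    then show "x \<in> (\<Union>F\<in>g -` A \<inter> PiE K (\<lambda>_. UNIV). PiE K (\<lambda>u. {F u}))"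
      by (intro UN_I[of x]) (auto simp: PiE_iff)
  next
    fix x assume "x \<in> (\<Union>F\<in>g -` A \<inter> PiE K (\<lambda>_. UNIV). PiE K (\<lambda>u. {F u}))"
    then obtain F where F: "F \<in> g -` A \<inter> PiE K (\<lambda>_. UNIV)" "x \<in> PiE K (\<lambda>u. {F u})" by blast
    have "x = F"
    proof (rule ext)
      fix i show "x i = F i" using F by (cases "i \<in> K") (auto simp: PiE_iff extensional_def)
    qed
    then show "x \<in> g -` A \<inter> PiE K (\<lambda>_. UNIV)" using F by simp
  qed
  also have "\<dots> \<in> sets ?P"
    using fin K by (intro sets.finite_UN sets_PiM_I_finite) auto
  finally show "g -` A \<inter> space ?P \<in> sets ?P" .
qed

locale gw = prob_space M for M :: "'m measure" +
  fixes W :: "('a::finite) set pmf" and Wf :: "'a list \<Rightarrow> 'm \<Rightarrow> 'a set"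
  assumes ind: "indep_vars (\<lambda>_. count_space UNIV) Wf UNIV"
    and dist: "\<And>u. distr M (count_space UNIV) (Wf u) = measure_pmf W"
begin

lemma Wf_meas: "Wf u \<in> measurable M (count_space UNIV)"
  using ind by (auto simp: indep_vars_def)

abbreviation "Kk k \<equiv> {u :: 'a list. length u < k}"

definition tr :: "('a list \<Rightarrow> 'a set) \<Rightarrow> nat \<Rightarrow> 'a list set" where
  "tr F k = gw_tree (\<lambda>u (_::unit). F u) k ()"

lemma T_tr: "\<omega> \<in> space M \<Longrightarrow> gw_tree Wf k \<omega> = tr (restrict (\<lambda>u. Wf u \<omega>) (Kk k)) k"
  unfolding tr_def by (rule gw_tree_local) auto

lemma restrict_meas: "(\<lambda>\<omega>. restrict (\<lambda>u. Wf u \<omega>) K) \<in> measurable M (PiM K (\<lambda>_. count_space UNIV))"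
  by (rule measurable_restrict) (rule Wf_meas)

lemma restrict_comp_meas:
  assumes "finite K" "space L = UNIV"
  shows "(\<lambda>\<omega>. g (restrict (\<lambda>u. Wf u \<omega>) K)) \<in> measurable M L"
  using measurable_compose[OF restrict_meas measurable_PiM_finite[OF assms, of g]] .

lemma T_meas_fun:
  assumes "space L = UNIV"
  shows "(\<lambda>\<omega>. h (gw_tree Wf k \<omega>)) \<in> measurable M L"
proof -
  have "(\<lambda>\<omega>. h (tr (restrict (\<lambda>u. Wf u \<omega>) (Kk k)) k)) \<in> measurable M L"
    by (rule restrict_comp_meas[OF finite_shorter assms])
  then show ?thesis by (rule measurable_cong[THEN iffD1, rotated]) (simp add: T_tr)
qed

lemma T_event: "{\<omega> \<in> space M. P (gw_tree Wf k \<omega>)} \<in> events"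
proof -
  have "(\<lambda>\<omega>. P (gw_tree Wf k \<omega>)) \<in> measurable M (count_space UNIV)"
    by (rule T_meas_fun) simp
  from measurable_sets[OF this, of "{True}"]
  have "(\<lambda>\<omega>. P (gw_tree Wf k \<omega>)) -` {True} \<inter> space M \<in> events" by simp
  moreover have "(\<lambda>\<omega>. P (gw_tree Wf k \<omega>)) -` {True} \<inter> space M = {\<omega> \<in> space M. P (gw_tree Wf k \<omega>)}" by auto
  ultimately show ?thesis by simp
qed

definition pT :: "nat \<Rightarrow> 'a list set \<Rightarrow> real" where
  "pT k S = prob {\<omega> \<in> space M. gw_tree Wf k \<omega> = S}"

lemma pT_nonneg: "0 \<le> pT k S" unfolding pT_def by simp

lemma T_borel: "(\<lambda>\<omega>. h (gw_tree Wf k \<omega>) :: real) \<in> borel_measurable M"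
  by (rule T_meas_fun) simp

lemma expect_decomp:
  fixes h :: "'a list set \<Rightarrow> real"
  shows "expectation (\<lambda>\<omega>. h (gw_tree Wf k \<omega>)) = (\<Sum>S\<in>Pow (words k). pT k S * h S)"
proof -
  have "expectation (\<lambda>\<omega>. h (gw_tree Wf k \<omega>)) =
        expectation (\<lambda>\<omega>. \<Sum>S\<in>Pow (words k). indicator {\<omega> \<in> space M. gw_tree Wf k \<omega> = S} \<omega> * h S)"
  proof (rule Bochner_Integration.integral_cong[OF refl])
    fix \<omega> assume \<omega>: "\<omega> \<in> space M"
    have "(\<Sum>S\<in>Pow (words k). indicator {\<omega> \<in> space M. gw_tree Wf k \<omega> = S} \<omega> * h S)
        = (\<Sum>S\<in>Pow (words k). if gw_tree Wf k \<omega> = S then h S else 0)"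
      using \<omega> by (intro sum.cong) (auto simp: indicator_def)
    also have "\<dots> = h (gw_tree Wf k \<omega>)"
      using gw_tree_words[of Wf k \<omega>] finite_words[of k] by (subst sum.delta') auto
    finally show "h (gw_tree Wf k \<omega>) = (\<Sum>S\<in>Pow (words k). indicator {\<omega> \<in> space M. gw_tree Wf k \<omega> = S} \<omega> * h S)" ..
  qed
  also have "\<dots> = (\<Sum>S\<in>Pow (words k). expectation (\<lambda>\<omega>. indicator {\<omega> \<in> space M. gw_tree Wf k \<omega> = S} \<omega> * h S))"
    by (rule Bochner_Integration.integral_sum) (auto intro!: integrable_mult_left integrable_real_indicator T_event simp: less_top[symmetric])
  also have "\<dots> = (\<Sum>S\<in>Pow (words k). pT k S * h S)"
    by (intro sum.cong refl) (simp add: pT_def T_event Int_absorb2 measure_def)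
  finally show ?thesis .
qed

lemma pT_sum: "(\<Sum>S\<in>Pow (words k). pT k S) = 1"
  using expect_decomp[of "\<lambda>_. 1" k] by (simp add: prob_space)

lemma E_Wf: "expectation (\<lambda>\<omega>. y ^ card (Wf u \<omega>)) = gf W y"
proof -
  have "expectation (\<lambda>\<omega>. y ^ card (Wf u \<omega>)) = integral\<^sup>L (distr M (count_space UNIV) (Wf u)) (\<lambda>T. y ^ card T)"
    by (rule integral_distr[symmetric]) (auto simp: Wf_meas)
  also have "\<dots> = measure_pmf.expectation W (\<lambda>T. y ^ card T)" by (simp add: dist)
  also have "\<dots> = gf W y" unfolding gf_def
    by (subst integral_measure_pmf_real[where A=UNIV]) (auto simp: mult.commute)
  finally show ?thesis .
qed

lemma indep_prod:
  assumes S: "S \<subseteq> words k" and y: "0 \<le> y" "y \<le> 1"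
  shows "expectation (\<lambda>\<omega>. indicator {\<omega> \<in> space M. gw_tree Wf k \<omega> = S} \<omega> * (\<Prod>u\<in>S. y ^ card (Wf u \<omega>)))
         = pT k S * gf W y ^ card S"
proof -
  have finS: "finite S" using S finite_words finite_subset by metis
  define g1 where "g1 F = (if tr F k = S then 1 else 0 :: real)" for F
  define g2 where "g2 F = (\<Prod>u\<in>S. y ^ card (F u :: 'a set))" for F
  define R where "R K \<omega> = restrict (\<lambda>u. Wf u \<omega>) K" for K \<omega>
  have disj: "Kk k \<inter> S = {}" using S by (auto simp: words_def)
  have iv: "indep_var (PiM (Kk k) (\<lambda>_. count_space UNIV)) (R (Kk k)) (PiM S (\<lambda>_. count_space UNIV)) (R S)"
    unfolding R_def by (rule indep_var_restrict[OF ind disj]) auto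
  have iv2: "indep_var borel (g1 \<circ> R (Kk k)) borel (g2 \<circ> R S)"
    by (rule indep_var_compose[OF iv]) (auto intro!: measurable_PiM_finite finite_shorter finS)
  have m1: "(g1 \<circ> R (Kk k)) \<in> borel_measurable M" unfolding o_def R_def
    by (rule restrict_comp_meas) (auto simp: finite_shorter)
  have m2: "(g2 \<circ> R S) \<in> borel_measurable M" unfolding o_def R_def
    by (rule restrict_comp_meas) (auto simp: finS)
  have i1: "integrable M (g1 \<circ> R (Kk k))"
    by (rule integrable_const_bound[where B=1]) (auto simp: g1_def m1)
  have i2: "integrable M (g2 \<circ> R S)"
    by (rule integrable_const_bound[where B=1])
       (auto simp: g2_def m2 y abs_prod intro!: prod_le_1 power_le_one)
  have e1: "\<And>\<omega>. \<omega> \<in> space M \<Longrightarrow> g1 (R (Kk k) \<omega>) = indicator {\<omega> \<in> space M. gw_tree Wf k \<omega> = S} \<omega>"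
    by (auto simp: g1_def R_def T_tr indicator_def)
  have e2: "\<And>\<omega>. g2 (R S \<omega>) = (\<Prod>u\<in>S. y ^ card (Wf u \<omega>))"
    by (auto simp: g2_def R_def)
  have "expectation (\<lambda>\<omega>. indicator {\<omega> \<in> space M. gw_tree Wf k \<omega> = S} \<omega> * (\<Prod>u\<in>S. y ^ card (Wf u \<omega>)))
      = expectation (\<lambda>\<omega>. (g1 \<circ> R (Kk k)) \<omega> * (g2 \<circ> R S) \<omega>)"
    by (intro Bochner_Integration.integral_cong) (auto simp: e1 e2 o_def)
  also have "\<dots> = expectation (g1 \<circ> R (Kk k)) * expectation (g2 \<circ> R S)"
    by (rule indep_var_lebesgue_integral[OF iv2 i1 i2])
  also have "expectation (g1 \<circ> R (Kk k)) = pT k S"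
  proof -
    have "expectation (g1 \<circ> R (Kk k)) = expectation (indicator {\<omega> \<in> space M. gw_tree Wf k \<omega> = S})"
      by (intro Bochner_Integration.integral_cong) (auto simp: e1 o_def)
    then show ?thesis by (simp add: pT_def Int_absorb2 measure_def)
  qed
  also have "expectation (g2 \<circ> R S) = (\<Prod>u\<in>S. expectation (\<lambda>\<omega>. y ^ card (Wf u \<omega>)))"
  proof -
    have ivs: "indep_vars (\<lambda>_. borel) (\<lambda>u \<omega>. y ^ card (Wf u \<omega>)) S"
      by (rule indep_vars_compose2[OF indep_vars_subset[OF ind], where Y="\<lambda>_ T. y ^ card T"]) auto
    have "expectation (g2 \<circ> R S) = expectation (\<lambda>\<omega>. \<Prod>u\<in>S. y ^ card (Wf u \<omega>))"
      by (simp add: e2 o_def)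
    also have "\<dots> = (\<Prod>u\<in>S. expectation (\<lambda>\<omega>. y ^ card (Wf u \<omega>)))"
    proof (rule indep_vars_lebesgue_integral[OF finS ivs])
      fix u
      have "(\<lambda>\<omega>. y ^ card (Wf u \<omega>)) \<in> borel_measurable M"
        using measurable_compose[OF Wf_meas, of "\<lambda>T. y ^ card T" borel u] by (simp add: o_def)
      then show "integrable M (\<lambda>\<omega>. y ^ card (Wf u \<omega>))"
        by (intro integrable_const_bound[where B=1]) (auto simp: y power_le_one)
    qed
    finally show ?thesis .
  qed
  also have "\<dots> = gf W y ^ card S" by (simp add: E_Wf)
  finally show ?thesis .
qed

definition gen :: "nat \<Rightarrow> real \<Rightarrow> real" where
  "gen k y = (\<Sum>S\<in>Pow (words k). pT k S * y ^ card S)"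

lemma gen_Suc:
  assumes y: "0 \<le> y" "y \<le> 1"
  shows "gen (Suc k) y = gen k (gf W y)"
proof -
  let ?I = "\<lambda>S \<omega>. indicator {\<omega> \<in> space M. gw_tree Wf k \<omega> = S} \<omega> * (\<Prod>u\<in>S. y ^ card (Wf u \<omega>)) :: real"
  have "gen (Suc k) y = expectation (\<lambda>\<omega>. y ^ card (gw_tree Wf (Suc k) \<omega>))"
    unfolding gen_def by (rule expect_decomp[symmetric])
  also have "\<dots> = expectation (\<lambda>\<omega>. \<Sum>S\<in>Pow (words k). ?I S \<omega>)"
  proof (rule Bochner_Integration.integral_cong[OF refl])
    fix \<omega> assume \<omega>: "\<omega> \<in> space M"
    have "(\<Sum>S\<in>Pow (words k). ?I S \<omega>) = (\<Sum>S\<in>Pow (words k). if gw_tree Wf k \<omega> = S then (\<Prod>u\<in>S. y ^ card (Wf u \<omega>)) else 0)"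
      using \<omega> by (intro sum.cong) (auto simp: indicator_def)
    also have "\<dots> = (\<Prod>u\<in>gw_tree Wf k \<omega>. y ^ card (Wf u \<omega>))"
      using gw_tree_words[of Wf k \<omega>] finite_words[of k] by (subst sum.delta') auto
    also have "\<dots> = y ^ card (gw_tree Wf (Suc k) \<omega>)"
      unfolding card_gw_tree_Suc by (simp add: power_sum)
    finally show "y ^ card (gw_tree Wf (Suc k) \<omega>) = (\<Sum>S\<in>Pow (words k). ?I S \<omega>)" ..
  qed
  also have "\<dots> = (\<Sum>S\<in>Pow (words k). expectation (?I S))"
  proof (rule Bochner_Integration.integral_sum)
    fix S :: "'a list set" assume S: "S \<in> Pow (words k)"
    have finS: "finite S" using S finite_words[of k] finite_subset by auto
    have "(\<lambda>\<omega>. \<Prod>u\<in>S. y ^ card (Wf u \<omega>)) \<in> borel_measurable M"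
    proof (rule borel_measurable_prod)
      fix u
      show "(\<lambda>\<omega>. y ^ card (Wf u \<omega>)) \<in> borel_measurable M"
        using measurable_compose[OF Wf_meas, of "\<lambda>T. y ^ card T" borel u] by (simp add: o_def)
    qed
    moreover have "indicator {\<omega> \<in> space M. gw_tree Wf k \<omega> = S} \<in> borel_measurable M"
      by (rule borel_measurable_indicator) (rule T_event)
    ultimately have "?I S \<in> borel_measurable M" by (rule borel_measurable_times[rotated])
    then show "integrable M (?I S)"
      by (intro integrable_const_bound[where B=1])
         (auto simp: indicator_def abs_prod y intro!: prod_le_1 power_le_one)
  qed
  also have "\<dots> = (\<Sum>S\<in>Pow (words k). pT k S * gf W y ^ card S)"
    by (intro sum.cong refl indep_prod y) auto
  finally show ?thesis unfolding gen_def .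
qed

lemma pT_0: "pT 0 S = (if S = {[]} then 1 else 0)"
proof -
  have "{\<omega> \<in> space M. gw_tree Wf 0 \<omega> = S} = (if S = {[]} then space M else {})" by auto
  then show ?thesis unfolding pT_def by (simp add: prob_space)
qed

lemma gen_it: "0 \<le> y \<Longrightarrow> y \<le> 1 \<Longrightarrow> gen k y = (gf W ^^ k) y"
proof (induction k arbitrary: y)
  case 0
  have "{[]} \<in> Pow (words 0 :: 'a list set)" by (simp add: words_def)
  moreover have "finite (Pow (words 0 :: 'a list set))" using finite_words by simp
  ultimately have "(\<Sum>S\<in>Pow (words 0 :: 'a list set). (if S = {[]} then 1 else 0) * y ^ card S)
     = (\<Sum>S\<in>Pow (words 0 :: 'a list set). if {[]} = S then y else 0)"
    by (intro sum.cong) auto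
  also have "\<dots> = y" using \<open>{[]} \<in> _\<close> \<open>finite _\<close> by (subst sum.delta') auto
  finally show ?case unfolding gen_def pT_0 by simp
next
  case (Suc k)
  have "gen (Suc k) y = gen k (gf W y)" using gen_Suc Suc.prems by simp
  also have "\<dots> = (gf W ^^ k) (gf W y)"
    using Suc.IH[of "gf W y"] gf_nonneg[of y W] gf_le1[of y W] Suc.prems by simp
  also have "\<dots> = (gf W ^^ Suc k) y" by (simp add: funpow_Suc_right del: funpow.simps)
  finally show ?case .
qed

lemma pT_empty: "pT k {} = (gf W ^^ k) 0"
proof -
  have "gen k 0 = (\<Sum>S\<in>Pow (words k). if S = {} then pT k S else 0)"
    unfolding gen_def
  proof (intro sum.cong refl)
    fix S :: "'a list set" assume "S \<in> Pow (words k)"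
    then have "finite S" using finite_words[of k] finite_subset by auto
    then show "pT k S * 0 ^ card S = (if S = {} then pT k S else 0)"
    proof (cases "S = {}")
      case False
      with \<open>finite S\<close> have "card S > 0" by (simp add: card_gt_0_iff)
      then show ?thesis using False by simp
    qed simp
  qed
  also have "\<dots> = pT k {}" using finite_words[of k] by (subst sum.delta) auto
  finally show ?thesis using gen_it[of 0 k] by simp
qed

lemma extinction_lim: "(\<lambda>k. (gf W ^^ k) 0) \<longlonglongrightarrow> gw_extinction_prob M Wf"
proof -
  define A where "A n = {\<omega> \<in> space M. gw_tree Wf n \<omega> = {}}" for n
  have "A n \<in> events" for n unfolding A_def by (rule T_event)
  then have "range A \<subseteq> events" by blast
  moreover have "incseq A"
  proof (rule incseq_SucI)
    fix n
    have "gw_tree Wf n \<omega> = {} \<Longrightarrow> gw_tree Wf (Suc n) \<omega> = {}" for \<omega> by simp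
    then show "A n \<subseteq> A (Suc n)" unfolding A_def by blast
  qed
  ultimately have "(\<lambda>i. prob (A i)) \<longlonglongrightarrow> prob (\<Union>i. A i)" by (rule finite_Lim_measure_incseq)
  moreover have "(\<Union>i. A i) = {\<omega> \<in> space M. \<exists>n. gw_tree Wf n \<omega> = {}}" unfolding A_def by auto
  moreover have "prob (A i) = (gf W ^^ i) 0" for i using pT_empty unfolding A_def pT_def by simp
  ultimately show ?thesis unfolding gw_extinction_prob_def by simp
qed

end


lemma prod_if_pow:
  assumes "finite A"
  shows "(\<Prod>w\<in>A. if P w then x else 1) = (x::real) ^ card {w\<in>A. P w}"
proof -
  have "(\<Prod>w\<in>A. if P w then x else 1) = (\<Prod>w\<in>{w\<in>A. P w}. x)"
    using assms by (subst prod.inter_filter[symmetric]) auto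
  then show ?thesis by simp
qed

lemma percol_expect:
  fixes S :: "('a::finite) list set"
  assumes S: "S \<subseteq> words k" and s: "0 \<le> s" "s \<le> 1" and x: "0 \<le> x"
  shows "measure_pmf.expectation (percol_pmf k s) (\<lambda>B. x ^ card (S \<inter> B)) = (s + (1 - s) * x) ^ card S"
proof -
  have fw: "finite (words k :: 'a list set)" by (rule finite_words)
  have "measure_pmf.expectation (percol_pmf k s) (\<lambda>B. x ^ card (S \<inter> B))
      = measure_pmf.expectation (Pi_pmf (words k) False (\<lambda>_. bernoulli_pmf (1 - s)))
          (\<lambda>f. x ^ card (S \<inter> {w. f w}))"
    unfolding percol_pmf_def by simp
  also have "\<dots> = measure_pmf.expectation (Pi_pmf (words k) False (\<lambda>_. bernoulli_pmf (1 - s)))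
          (\<lambda>f. \<Prod>w\<in>words k. (\<lambda>w b. if w \<in> S \<and> b then x else 1) w (f w))"
  proof (intro Bochner_Integration.integral_cong refl)
    fix f :: "'a list \<Rightarrow> bool"
    have "{w \<in> words k. w \<in> S \<and> f w} = S \<inter> {w. f w}" using S by auto
    then show "x ^ card (S \<inter> {w. f w}) = (\<Prod>w\<in>words k. (\<lambda>w b. if w \<in> S \<and> b then x else 1) w (f w))"
      using prod_if_pow[OF fw, of "\<lambda>w. w \<in> S \<and> f w" x] by simp
  qed
  also have "\<dots> = (\<Prod>w\<in>words k. measure_pmf.expectation (bernoulli_pmf (1 - s)) (\<lambda>b. if w \<in> S \<and> b then x else 1))"
    by (rule expectation_prod_Pi_pmf[OF fw]) (auto intro: integrable_measure_pmf_finite simp: x)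
  also have "\<dots> = (\<Prod>w\<in>words k. if w \<in> S then s + (1 - s) * x else 1)"
    using s by (intro prod.cong refl) (auto simp: algebra_simps)
  also have "\<dots> = (s + (1 - s) * x) ^ card S"
  proof -
    have "{w\<in>words k. w \<in> S} = S" using S by auto
    then show ?thesis using prod_if_pow[OF fw, of "\<lambda>w. w \<in> S"] by simp
  qed
  finally show ?thesis .
qed

lemma hh_bound:
  fixes S :: "('a::finite) list set"
  assumes S: "S \<subseteq> words k" and s: "0 \<le> s" "s \<le> 1" and x: "0 < x" "x \<le> 1"
  shows "measure_pmf.prob (percol_pmf k s) {B. card (S \<inter> B) < a} \<le> (s + (1 - s) * x) ^ card S / x ^ a"
proof -
  let ?P = "percol_pmf k s"
  have "measure_pmf.prob ?P {B. card (S \<inter> B) < a} = measure_pmf.expectation ?P (indicator {B. card (S \<inter> B) < a})"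
    by simp
  also have "\<dots> \<le> measure_pmf.expectation ?P (\<lambda>B. x ^ card (S \<inter> B) / x ^ a)"
  proof (rule integral_mono)
    show "integrable (measure_pmf ?P) (indicat_real {B. card (S \<inter> B) < a})"
      by (intro measure_pmf.integrable_const_bound[where B=1]) auto
    show "integrable (measure_pmf ?P) (\<lambda>B. x ^ card (S \<inter> B) / x ^ a)"
      using x by (intro measure_pmf.integrable_const_bound[where B="1 / x ^ a"])
         (auto intro!: divide_right_mono power_le_one)
    fix B :: "'a list set"
    show "indicat_real {B. card (S \<inter> B) < a} B \<le> x ^ card (S \<inter> B) / x ^ a"
    proof (cases "card (S \<inter> B) < a")
      case True
      then have "x ^ a \<le> x ^ card (S \<inter> B)" using x by (intro power_decreasing) auto
      then show ?thesis using True x by (simp add: indicator_def)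
    qed (use x in \<open>simp add: indicator_def\<close>)
  qed
  also have "\<dots> = measure_pmf.expectation ?P (\<lambda>B. x ^ card (S \<inter> B)) / x ^ a"
    by simp
  also have "\<dots> = (s + (1 - s) * x) ^ card S / x ^ a"
    using percol_expect[OF S s, of x] x by simp
  finally show ?thesis .
qed

context gw begin

lemma T_event_eq: "{\<omega> \<in> space M. gw_tree Wf k \<omega> = S} \<in> events"
  using T_event[of "\<lambda>T. T = S" k] by simp

lemma gw_g_decomp:
  "gw_g M Wf k a s = (\<Sum>S\<in>Pow (words k). pT k S * measure_pmf.prob (percol_pmf k s) {B. card (S \<inter> B) < a})"
proof -
  let ?P = "measure_pmf (percol_pmf k s)"
  let ?A = "\<lambda>S. {\<omega> \<in> space M. gw_tree Wf k \<omega> = S}"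
  let ?B = "\<lambda>S. {B. card (S \<inter> B) < a}"
  interpret MP: prob_space "M \<Otimes>\<^sub>M ?P"
    by (rule prob_space_pair) (auto simp: prob_space_axioms prob_space_measure_pmf)
  have sfP: "sigma_finite_measure ?P"
    by (rule prob_space_imp_sigma_finite[OF prob_space_measure_pmf])
  have fin: "finite (Pow (words k) :: 'a list set set)" using finite_words by simp
  have eq: "{(\<omega>, B). \<omega> \<in> space M \<and> card (gw_tree Wf k \<omega> \<inter> B) < a} = (\<Union>S\<in>Pow (words k). ?A S \<times> ?B S)"
    using gw_tree_words by fastforce
  have "gw_g M Wf k a s = measure (M \<Otimes>\<^sub>M ?P) (\<Union>S\<in>Pow (words k). ?A S \<times> ?B S)"
    unfolding gw_g_def eq ..
  also have "\<dots> = (\<Sum>S\<in>Pow (words k). measure (M \<Otimes>\<^sub>M ?P) (?A S \<times> ?B S))"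
  proof (rule measure_finite_Union[OF fin])
    show "(\<lambda>S. ?A S \<times> ?B S) ` Pow (words k) \<subseteq> sets (M \<Otimes>\<^sub>M ?P)"
      using T_event_eq by auto
    show "disjoint_family_on (\<lambda>S. ?A S \<times> ?B S) (Pow (words k))"
      by (auto simp: disjoint_family_on_def)
    show "\<And>S. emeasure (M \<Otimes>\<^sub>M ?P) (?A S \<times> ?B S) \<noteq> \<infinity>"
      using MP.emeasure_finite by simp
  qed
  also have "\<dots> = (\<Sum>S\<in>Pow (words k). pT k S * measure_pmf.prob (percol_pmf k s) (?B S))"
  proof (intro sum.cong refl)
    fix S
    have "emeasure (M \<Otimes>\<^sub>M ?P) (?A S \<times> ?B S) = emeasure M (?A S) * emeasure ?P (?B S)"
      by (rule sigma_finite_measure.emeasure_pair_measure_Times[OF sfP]) (auto simp: T_event_eq)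
    then show "measure (M \<Otimes>\<^sub>M ?P) (?A S \<times> ?B S) = pT k S * measure_pmf.prob (percol_pmf k s) (?B S)"
      unfolding pT_def measure_def by (simp add: enn2real_mult)
  qed
  finally show ?thesis .
qed

end



theorem lemma4p3:
  fixes M :: "'m measure" and W :: "('a::finite) set pmf"
    and Wf :: "'a list \<Rightarrow> 'm \<Rightarrow> 'a set" and a :: "nat \<Rightarrow> nat" and s :: real
  assumes "prob_space M"
    and "prob_space.indep_vars M (\<lambda>_. count_space UNIV) Wf UNIV"
    and "\<And>u. distr M (count_space UNIV) (Wf u) = measure_pmf W"
    and "\<And>i. measure_pmf.prob W {S. i \<in> S} > 0"
    and "measure_pmf.expectation W (\<lambda>S. real (card S)) > 1"
    and "\<And>k. a k > 0"
    and "limsup (\<lambda>k. ereal (root k (real (a k)))) < ereal (measure_pmf.expectation W (\<lambda>S. real (card S)))"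
    and "0 < s" and "s < 1"
  shows "(\<lambda>k. gw_g M Wf k (a k) s) \<longlonglongrightarrow> gw_extinction_prob M Wf"
proof -
  interpret gw M W Wf
    using assms(1-3) by (simp add: gw_def gw_axioms_def)
  define m where "m = measure_pmf.expectation W (\<lambda>S. real (card S))"
  have mn: "mn W = m" unfolding m_def mn_def
    by (subst integral_measure_pmf_real[where A=UNIV]) (auto simp: mult.commute)
  have m1: "mn W > 1" using assms(5) mn m_def by simp
  define q where "q = gw_extinction_prob M Wf"
  have lim: "(\<lambda>k. (gf W ^^ k) 0) \<longlonglongrightarrow> q" unfolding q_def by (rule extinction_lim)
  note qf = gf_fix_q[OF lim]
  define g where "g k = gw_g M Wf k (a k) s" for k
  obtain c0 where c0: "limsup (\<lambda>k. ereal (root k (real (a k)))) < ereal c0" "ereal c0 < ereal m"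
    using ereal_dense2[OF assms(7)[folded m_def]] by blast
  define c where "c = max c0 ((1 + m) / 2)"
  have c: "1 \<le> c" "c < m" using c0 m1 mn unfolding c_def by (auto simp: le_max_iff_disj)
  have "limsup (\<lambda>k. ereal (root k (real (a k)))) < ereal c"
    using c0(1) unfolding c_def by (rule order.strict_trans2) simp
  then have ev1: "\<forall>\<^sub>F k in sequentially. ereal (root k (real (a k))) < ereal c"
    by (rule Limsup_lessD)
  have evc: "\<forall>\<^sub>F k in sequentially. real (a k) \<le> c ^ k"
    using ev1 eventually_gt_at_top[of 0]
  proof eventually_elim
    case (elim k)
    then have r: "root k (real (a k)) < c" by simp
    have "real (a k) = root k (real (a k)) ^ k" using elim by simp
    also have "\<dots> \<le> c ^ k" using r by (intro power_mono) (auto simp: elim)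
    finally show ?case .
  qed
  have lower: "\<forall>\<^sub>F k in sequentially. q - e < g k" if e: "e > 0" for e
  proof -
    have "\<forall>\<^sub>F k in sequentially. q - e < (gf W ^^ k) 0"
      using lim e by (auto simp: tendsto_iff dist_real_def dest!: spec[of _ e] elim: eventually_mono)
    then show ?thesis
    proof (rule eventually_mono)
      fix k assume k: "q - e < (gf W ^^ k) 0"
      have "(\<Sum>S\<in>Pow (words k). if S = {} then pT k S else 0) \<le>
            (\<Sum>S\<in>Pow (words k). pT k S * measure_pmf.prob (percol_pmf k s) {B. card (S \<inter> B) < a k})"
      proof (rule sum_mono)
        fix S :: "'a list set"
        show "(if S = {} then pT k S else 0) \<le> pT k S * measure_pmf.prob (percol_pmf k s) {B. card (S \<inter> B) < a k}"
          using assms(6)[of k] by (auto simp: pT_nonneg)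
      qed
      moreover have "(\<Sum>S\<in>Pow (words k). if S = {} then pT k S else 0) = pT k {}"
        using finite_words[of k] by (subst sum.delta) auto
      ultimately have "pT k {} \<le> g k" unfolding g_def gw_g_decomp by simp
      then show "q - e < g k" using k pT_empty by simp
    qed
  qed
  have upper: "\<forall>\<^sub>F k in sequentially. g k < q + e" if e: "e > 0" for e
  proof -
    define \<delta> where "\<delta> = min (1/2) (e/8)"
    have \<delta>: "0 < \<delta>" "\<delta> \<le> 1/2" "\<delta> \<le> e/8" using e unfolding \<delta>_def by auto
    define \<epsilon> where "\<epsilon> = (1 - s) * \<delta>"
    have \<epsilon>: "0 < \<epsilon>" "\<epsilon> \<le> 1" using \<delta> assms(8,9) unfolding \<epsilon>_def by (auto intro: mult_le_one)
    have ev2: "\<forall>\<^sub>F k in sequentially. \<forall>y. 0 \<le> y \<and> y \<le> 1 - \<epsilon> / c ^ k \<longrightarrow> (gf W ^^ k) y \<le> q + \<delta>"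
      by (rule analytic_main[OF m1 lim c(1) _ \<epsilon> \<delta>(1)]) (use c mn in simp)
    show ?thesis using ev2 evc
    proof eventually_elim
      case (elim k)
      define ak where "ak = real (a k)"
      have ak: "1 \<le> ak" using assms(6)[of k] unfolding ak_def by simp
      define x where "x = 1 - \<delta> / ak"
      have x: "0 < x" "x \<le> 1" using \<delta> ak unfolding x_def by (auto simp: field_simps)
      define y where "y = s + (1 - s) * x"
      have y1: "y = 1 - (1 - s) * \<delta> / ak" unfolding y_def x_def using ak by (simp add: field_simps)
      have y0: "0 \<le> y" using x assms(8,9) unfolding y_def by simp
      have yle: "y \<le> 1 - \<epsilon> / c ^ k"
      proof -
        have "\<epsilon> / c ^ k \<le> \<epsilon> / ak"
          using elim(2) ak \<epsilon> unfolding ak_def by (intro divide_left_mono) auto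
        then show ?thesis unfolding y1 \<epsilon>_def by simp
      qed
      have xa: "1 - \<delta> \<le> x ^ a k"
      proof -
        have "1 + real (a k) * (- \<delta> / ak) \<le> (1 + (- \<delta> / ak)) ^ a k"
          by (rule Bernoulli_inequality) (use \<delta> ak in \<open>auto simp: field_simps\<close>)
        then show ?thesis unfolding x_def ak_def using ak unfolding ak_def by simp
      qed
      have "g k \<le> (\<Sum>S\<in>Pow (words k). pT k S * (y ^ card S / x ^ a k))"
        unfolding g_def gw_g_decomp
        by (intro sum_mono mult_left_mono pT_nonneg, unfold y_def)
           (rule hh_bound, use assms(8,9) x in auto)
      also have "\<dots> = gen k y / x ^ a k"
        unfolding gen_def by (simp add: sum_divide_distrib)
      also have "\<dots> = (gf W ^^ k) y / x ^ a k"
      proof -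
        have "(1 - s) * \<delta> / ak \<ge> 0" using assms(8,9) \<delta> ak by simp
        then have "y \<le> 1" unfolding y1 by simp
        then show ?thesis using gen_it[OF y0] by simp
      qed
      also have "\<dots> \<le> (q + \<delta>) / (1 - \<delta>)"
        using elim(1) yle y0 xa \<delta> x it_nonneg[where x=y and W=W and i=k] qf
        by (intro frac_le) auto
      also have "\<dots> \<le> q + 4 * \<delta>"
      proof -
        have "q + \<delta> \<le> (q + 4 * \<delta>) * (1 - \<delta>)"
        proof -
          have "\<delta> * (3 - q - 4 * \<delta>) \<ge> 0" using \<delta> qf by (intro mult_nonneg_nonneg) auto
          then show ?thesis by (simp add: algebra_simps)
        qed
        then show ?thesis using \<delta> by (simp add: field_simps)
      qed
      also have "\<dots> < q + e" using \<delta> e by simp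
      finally show ?case .
    qed
  qed
  show ?thesis
    unfolding q_def[symmetric] g_def[symmetric]
  proof (rule tendstoI)
    fix e :: real assume e: "e > 0"
    show "\<forall>\<^sub>F k in sequentially. dist (g k) q < e"
      using lower[OF e] upper[OF e] by eventually_elim (auto simp: dist_real_def)
  qed
qed

end
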